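(* Let $U\colon[0,1]^2\to[0,1]$ be a uninorm with neutral element $e\in(0,1)$, $U\in\mathcal U$. If for some $x_1<x_2$ in $[0,1]$ both functions $u_{x_1}$ and $u_{x_2}$ are non-continuous at the same point $y\in[0,1]$, then $y$ is an idempotent element of $U$.
   Context: A uninorm is a commutative, associative binary operation on $[0,1]$, non-decreasing in each variable, with a neutral element $e$. Underlying t-norm $T_U(x,y)=U(ex,ey)/e$, underlying t-conorm $C_U(x,y)=(U(e+(1-e)x,e+(1-e)y)-e)/(1-e)$; $\mathcal U$ is the class of uninorms for which both are continuous. For $x\in[0,1]$, $u_x\colon[0,1]\to[0,1]$ is $u_x(z)=U(x,z)$. An idempotent element is $x$ with $U(x,x)=x$. *)

theory Defs
  imports "HOL-Analysis.Analysis"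
begin

definition uninorm :: "(real \<Rightarrow> real \<Rightarrow> real) \<Rightarrow> real \<Rightarrow> bool" where
  "uninorm U e \<longleftrightarrow>
     e \<in> {0..1} \<and>
     (\<forall>x\<in>{0..1}. \<forall>y\<in>{0..1}. U x y \<in> {0..1}) \<and>
     (\<forall>x\<in>{0..1}. \<forall>y\<in>{0..1}. U x y = U y x) \<and>
     (\<forall>x\<in>{0..1}. \<forall>y\<in>{0..1}. \<forall>z\<in>{0..1}. U (U x y) z = U x (U y z)) \<and>
     (\<forall>x\<in>{0..1}. \<forall>y\<in>{0..1}. \<forall>z\<in>{0..1}. y \<le> z \<longrightarrow> U x y \<le> U x z) \<and>
     (\<forall>x\<in>{0..1}. U e x = x)"

definition underlying_tnorm :: "(real \<Rightarrow> real \<Rightarrow> real) \<Rightarrow> real \<Rightarrow> real \<Rightarrow> real \<Rightarrow> real" where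
  "underlying_tnorm U e x y = U (e * x) (e * y) / e"

definition underlying_tconorm :: "(real \<Rightarrow> real \<Rightarrow> real) \<Rightarrow> real \<Rightarrow> real \<Rightarrow> real \<Rightarrow> real" where
  "underlying_tconorm U e x y = (U (e + (1 - e) * x) (e + (1 - e) * y) - e) / (1 - e)"

definition in_class_U :: "(real \<Rightarrow> real \<Rightarrow> real) \<Rightarrow> real \<Rightarrow> bool" where
  "in_class_U U e \<longleftrightarrow>
     continuous_on ({0..1} \<times> {0..1}) (\<lambda>p. underlying_tnorm U e (fst p) (snd p)) \<and>
     continuous_on ({0..1} \<times> {0..1}) (\<lambda>p. underlying_tconorm U e (fst p) (snd p))"

definition idempotent_elem :: "(real \<Rightarrow> real \<Rightarrow> real) \<Rightarrow> real \<Rightarrow> bool" where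
  "idempotent_elem U x \<longleftrightarrow> U x x = x"

end

theory Submission imports Defs begin

lemma h1: "y < (b::real) \<Longrightarrow> 0 < d \<Longrightarrow> \<bar>max ((y+b)/2) (b-d/2) - b\<bar> < d"
  by (cases "(y+b)/2 \<le> b-d/2") (auto simp add: max_def abs_if field_simps)
lemma h2: "y < (e::real) \<Longrightarrow> 0 < d \<Longrightarrow> \<bar>min (y + d/2) e - y\<bar> < d"
  by (cases "y + d/2 \<le> e") (auto simp add: min_def abs_if field_simps)

lemma mono_cont:
  fixes f :: "real \<Rightarrow> real"
  assumes mono: "\<And>s t. 0 \<le> s \<Longrightarrow> s \<le> t \<Longrightarrow> t \<le> 1 \<Longrightarrow> f s \<le> f t"
    and y: "0 \<le> y" "y \<le> 1"
    and R: "\<And>\<epsilon>. \<epsilon> > 0 \<Longrightarrow> y < 1 \<Longrightarrow> \<exists>t. y < t \<and> t \<le> 1 \<and> f t < f y + \<epsilon>"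
    and L: "\<And>\<epsilon>. \<epsilon> > 0 \<Longrightarrow> 0 < y \<Longrightarrow> \<exists>t. 0 \<le> t \<and> t < y \<and> f y - \<epsilon> < f t"
  shows "continuous (at y within {0..1}) f"
  unfolding continuous_within_eps_delta
proof (intro allI impI)
  fix \<epsilon> :: real assume \<epsilon>: "\<epsilon> > 0"
  obtain d1 where d1: "d1 > 0" "\<And>x. x \<in> {0..1} \<Longrightarrow> y \<le> x \<Longrightarrow> x < y + d1 \<Longrightarrow> f x < f y + \<epsilon>"
  proof (cases "y < 1")
    case True
    then obtain t where t: "y < t" "t \<le> 1" "f t < f y + \<epsilon>" using R \<epsilon> by blast
    show ?thesis
    proof (rule that[of "t - y"])
      fix x assume "x \<in> {0..1}" "y \<le> x" "x < y + (t - y)"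
      then have "f x \<le> f t" by (intro mono) (use y t in auto)
      then show "f x < f y + \<epsilon>" using t by linarith
    qed (use t in auto)
  next
    case False
    show ?thesis
      by (rule that[of 1]) (use False y \<epsilon> in auto)
  qed
  obtain d2 where d2: "d2 > 0" "\<And>x. x \<in> {0..1} \<Longrightarrow> x \<le> y \<Longrightarrow> y - d2 < x \<Longrightarrow> f y - \<epsilon> < f x"
  proof (cases "0 < y")
    case True
    then obtain t where t: "0 \<le> t" "t < y" "f y - \<epsilon> < f t" using L \<epsilon> by blast
    show ?thesis
    proof (rule that[of "y - t"])
      fix x assume "x \<in> {0..1}" "x \<le> y" "y - (y - t) < x"
      then have "f t \<le> f x" by (intro mono) (use y t in auto)
      then show "f y - \<epsilon> < f x" using t by linarith
    qed (use t in auto)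
  next
    case False
    show ?thesis
      by (rule that[of 1]) (use False y \<epsilon> in auto)
  qed
  show "\<exists>\<delta>>0. \<forall>x'\<in>{0..1}. dist x' y < \<delta> \<longrightarrow> dist (f x') (f y) < \<epsilon>"
  proof (intro exI[of _ "min d1 d2"] conjI ballI impI)
    show "min d1 d2 > 0" using d1 d2 by auto
    fix x assume x: "x \<in> {0..1}" "dist x y < min d1 d2"
    show "dist (f x) (f y) < \<epsilon>"
    proof (cases "y \<le> x")
      case True
      have "f y \<le> f x" by (intro mono) (use True x y in auto)
      moreover have "f x < f y + \<epsilon>" using d1(2)[OF x(1) True] x True by (auto simp: dist_real_def)
      ultimately show ?thesis by (simp add: dist_real_def)
    next
      case False
      have "f x \<le> f y" by (intro mono) (use False x y in auto)
      moreover have "f y - \<epsilon> < f x" using d2(2)[OF x(1)] x False by (auto simp: dist_real_def)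
      ultimately show ?thesis by (simp add: dist_real_def)
    qed
  qed
qed

locale unin =
  fixes U :: "real \<Rightarrow> real \<Rightarrow> real" and e :: real
  assumes un: "uninorm U e" and e0: "0 < e" and e1: "e < 1"
    and cT: "\<And>a. a \<in> {0..e} \<Longrightarrow> continuous_on {0..e} (U a)"
    and cC: "\<And>a. a \<in> {e..1} \<Longrightarrow> continuous_on {e..1} (U a)"
begin

lemma rng: "0 \<le> a \<Longrightarrow> a \<le> 1 \<Longrightarrow> 0 \<le> b \<Longrightarrow> b \<le> 1 \<Longrightarrow> 0 \<le> U a b \<and> U a b \<le> 1"
  using un unfolding uninorm_def by auto

lemma comm: "0 \<le> a \<Longrightarrow> a \<le> 1 \<Longrightarrow> 0 \<le> b \<Longrightarrow> b \<le> 1 \<Longrightarrow> U a b = U b a"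
  using un unfolding uninorm_def by auto

lemma assoc: "0 \<le> a \<Longrightarrow> a \<le> 1 \<Longrightarrow> 0 \<le> b \<Longrightarrow> b \<le> 1 \<Longrightarrow> 0 \<le> c \<Longrightarrow> c \<le> 1
   \<Longrightarrow> U (U a b) c = U a (U b c)"
  using un unfolding uninorm_def by auto

lemma mono2: "0 \<le> a \<Longrightarrow> a \<le> 1 \<Longrightarrow> 0 \<le> b \<Longrightarrow> b \<le> c \<Longrightarrow> c \<le> 1 \<Longrightarrow> U a b \<le> U a c"
  using un unfolding uninorm_def by auto

lemma mono1: "0 \<le> a \<Longrightarrow> a \<le> b \<Longrightarrow> b \<le> 1 \<Longrightarrow> 0 \<le> c \<Longrightarrow> c \<le> 1 \<Longrightarrow> U a c \<le> U b c"
  using mono2[of c a b] comm[of a c] comm[of b c] by auto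

lemma neutL: "0 \<le> a \<Longrightarrow> a \<le> 1 \<Longrightarrow> U e a = a"
  using un unfolding uninorm_def by auto

lemma neutR: "0 \<le> a \<Longrightarrow> a \<le> 1 \<Longrightarrow> U a e = a"
  using neutL comm[of a e] e0 e1 by auto

lemma zeroR: "0 \<le> a \<Longrightarrow> a \<le> e \<Longrightarrow> U a 0 = 0"
proof -
  assume a: "0 \<le> a" "a \<le> e"
  have "U a 0 \<le> U e 0" using mono1[of a e 0] a e1 by auto
  also have "U e 0 = 0" using neutL[of 0] by simp
  finally show ?thesis using rng[of a 0] a e1 by auto
qed

lemma oneR: "e \<le> a \<Longrightarrow> a \<le> 1 \<Longrightarrow> U a 1 = 1"
proof -
  assume a: "e \<le> a" "a \<le> 1"
  have "U e 1 \<le> U a 1" using mono1[of e a 1] a e0 by auto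
  moreover have "U e 1 = 1" using neutL[of 1] by simp
  ultimately show ?thesis using rng[of a 1] a e0 by auto
qed

lemma cont1:
  assumes x: "0 \<le> x" "x \<le> 1" and yz: "0 \<le> y" "y < z" "z \<le> e" and v: "U x z \<le> e"
  shows "continuous (at y within {0..1}) (U x)"
proof -
  define v where "v = U x z"
  have v01: "0 \<le> v" using rng[of x z] x yz e1 v_def by auto
  have pre: "\<exists>t. 0 \<le> t \<and> t \<le> z \<and> U x t = p" if p: "0 \<le> p" "p \<le> v" for p
  proof -
    have "U v 0 = 0" using zeroR[of v] v01 v v_def by auto
    moreover have "U v e = v" using neutR[of v] v01 v v_def e1 by auto
    moreover have "continuous_on {0..e} (U v)" using cT[of v] v01 v v_def by auto
    ultimately obtain w where w: "0 \<le> w" "w \<le> e" "U v w = p"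
      using IVT'[of "U v" 0 p e] p e0 by auto
    have t1: "0 \<le> U z w" using rng[of z w] w yz e1 by auto
    have t2: "U z w \<le> z" using mono2[of z w e] neutR[of z] w yz e1 by auto
    have "U x (U z w) = p" using assoc[of x z w] w yz x e1 v_def by (auto simp: w(3)[symmetric])
    then show ?thesis using t1 t2 by blast
  qed
  show ?thesis
  proof (rule mono_cont)
    show "U x s \<le> U x t" if "0 \<le> s" "s \<le> t" "t \<le> 1" for s t
      using mono2[of x s t] that x by auto
    show "0 \<le> y" "y \<le> 1" using yz e1 by auto
  next
    fix \<epsilon> :: real assume \<epsilon>: "\<epsilon> > 0"
    have le: "U x y \<le> v" using mono2[of x y z] x yz e1 v_def by auto
    show "\<exists>t>y. t \<le> 1 \<and> U x t < U x y + \<epsilon>"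
    proof (cases "U x y = v")
      case True
      then show ?thesis using yz e1 \<epsilon> v_def by (intro exI[of _ z]) auto
    next
      case False
      define p where "p = min (U x y + \<epsilon>/2) v"
      have p: "0 \<le> p" "p \<le> v" "U x y < p" "p < U x y + \<epsilon>"
        using False le \<epsilon> rng[of x y] x yz e1 unfolding p_def by (auto simp: min_def max_def)
      obtain t where t: "0 \<le> t" "t \<le> z" "U x t = p" using pre p by blast
      have "y < t"
      proof (rule ccontr)
        assume "\<not> y < t"
        then have "U x t \<le> U x y" using mono2[of x t y] x t yz e1 by auto
        then show False using t p by auto
      qed
      then show ?thesis using t p yz e1 by (intro exI[of _ t]) auto
    qed
  next
    fix \<epsilon> :: real assume \<epsilon>: "\<epsilon> > 0" and y0: "0 < y"
    have le: "U x y \<le> v" using mono2[of x y z] x yz e1 v_def by auto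
    have ge: "0 \<le> U x y" using rng[of x y] x yz e1 by auto
    show "\<exists>t. 0 \<le> t \<and> t < y \<and> U x y - \<epsilon> < U x t"
    proof (cases "U x y = 0")
      case True
      then show ?thesis using rng[of x 0] x y0 \<epsilon> by (intro exI[of _ 0]) auto
    next
      case False
      define p where "p = max (U x y - \<epsilon>/2) (U x y / 2)"
      have p: "0 \<le> p" "p \<le> v" "p < U x y" "U x y - \<epsilon> < p"
        using False le ge \<epsilon> unfolding p_def by (auto simp: min_def max_def)
      obtain t where t: "0 \<le> t" "t \<le> z" "U x t = p" using pre p by blast
      have "t < y"
      proof (rule ccontr)
        assume "\<not> t < y"
        then have "U x y \<le> U x t" using mono2[of x y t] x t yz e1 by auto
        then show False using t p by auto
      qed
      then show ?thesis using t p by (intro exI[of _ t]) auto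
    qed
  qed
qed

lemma cont3:
  assumes x: "0 \<le> x" "x \<le> 1" and yt: "0 \<le> t1" "t1 < y" "y < e" and v: "e \<le> U x t1"
  shows "continuous (at y within {0..1}) (U x)"
proof -
  define v where "v = U x t1"
  have vx: "v \<le> x" using mono2[of x t1 e] neutR[of x] x yt e1 v_def by auto
  have v1: "v \<le> 1" using vx x by auto
  have pre: "\<exists>t. t1 \<le> t \<and> t \<le> e \<and> U x t = p" if p: "v \<le> p" "p < x" for p
  proof -
    have "U v 1 = 1" using oneR[of v] v v1 v_def by auto
    moreover have "U v e = v" using neutR[of v] v v1 v_def e0 by auto
    moreover have "continuous_on {e..1} (U v)" using cC[of v] v v1 v_def by auto
    ultimately obtain r where r: "e \<le> r" "r \<le> 1" "U v r = p"
      using IVT'[of "U v" e p 1] p x e1 by auto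
    define q where "q = U t1 r"
    have q0: "t1 \<le> q" using mono2[of t1 e r] neutR[of t1] r yt e1 q_def by auto
    have q1: "q \<le> 1" using rng[of t1 r] r yt e0 e1 q_def by auto
    have xq: "U x q = p" using assoc[of x t1 r] r yt x e0 e1 v_def q_def by (auto simp: r(3)[symmetric])
    have "q \<le> e"
    proof (rule ccontr)
      assume "\<not> q \<le> e"
      then have "U x e \<le> U x q" using mono2[of x e q] x q1 e0 by auto
      then show False using neutR[of x] x xq p by auto
    qed
    then show ?thesis using q0 xq by blast
  qed
  show ?thesis
  proof (rule mono_cont)
    show "U x s \<le> U x t" if "0 \<le> s" "s \<le> t" "t \<le> 1" for s t
      using mono2[of x s t] that x by auto
    show "0 \<le> y" "y \<le> 1" using yt e1 by auto
  next
    fix \<epsilon> :: real assume \<epsilon>: "\<epsilon> > 0"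
    have le: "U x y \<le> x" using mono2[of x y e] neutR[of x] x yt e1 by auto
    have ge: "v \<le> U x y" using mono2[of x t1 y] x yt e1 v_def by auto
    show "\<exists>t>y. t \<le> 1 \<and> U x t < U x y + \<epsilon>"
    proof (cases "U x y = x")
      case True
      then show ?thesis using yt e1 \<epsilon> neutR[of x] x by (intro exI[of _ e]) auto
    next
      case False
      define p where "p = min (U x y + \<epsilon>/2) ((U x y + x)/2)"
      have p: "v \<le> p" "p < x" "U x y < p" "p < U x y + \<epsilon>"
        using False le ge \<epsilon> unfolding p_def by (auto simp: min_def max_def)
      obtain t where t: "t1 \<le> t" "t \<le> e" "U x t = p" using pre p by blast
      have "y < t"
      proof (rule ccontr)
        assume "\<not> y < t"
        then have "U x t \<le> U x y" using mono2[of x t y] x t yt e1 by auto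
        then show False using t p by auto
      qed
      then show ?thesis using t p e1 by (intro exI[of _ t]) auto
    qed
  next
    fix \<epsilon> :: real assume \<epsilon>: "\<epsilon> > 0" and y0: "0 < y"
    have le: "U x y \<le> x" using mono2[of x y e] neutR[of x] x yt e1 by auto
    have ge: "v \<le> U x y" using mono2[of x t1 y] x yt e1 v_def by auto
    show "\<exists>t. 0 \<le> t \<and> t < y \<and> U x y - \<epsilon> < U x t"
    proof (cases "U x y = v")
      case True
      then show ?thesis using yt \<epsilon> v_def by (intro exI[of _ t1]) auto
    next
      case False
      define p where "p = max (U x y - \<epsilon>/2) ((v + U x y) / 2)"
      have p: "v \<le> p" "p < x" "p < U x y" "U x y - \<epsilon> < p"
        using False le ge \<epsilon> unfolding p_def by (auto simp: min_def max_def)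
      obtain t where t: "t1 \<le> t" "t \<le> e" "U x t = p" using pre p by blast
      have "t < y"
      proof (rule ccontr)
        assume "\<not> t < y"
        then have "U x y \<le> U x t" using mono2[of x y t] x t yt e1 by auto
        then show False using t p by auto
      qed
      then show ?thesis using t p yt by (intro exI[of _ t]) auto
    qed
  qed
qed

lemma pt_cont:
  assumes "continuous_on S f" "b \<in> S" "\<epsilon> > 0"
  shows "\<exists>\<delta>>0. \<forall>t\<in>S. dist t b < \<delta> \<longrightarrow> dist (f t) (f b) < (\<epsilon>::real)"
  using assms unfolding continuous_on_iff by blast

lemma main:
  assumes x: "0 \<le> x1" "x1 < x2" "x2 \<le> 1" and y: "0 \<le> y" "y < e"
    and d1: "\<not> continuous (at y within {0..1}) (U x1)"
    and d2: "\<not> continuous (at y within {0..1}) (U x2)"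
  shows "U y y = y"
proof (rule ccontr)
  assume ne: "U y y \<noteq> y"
  have "U y y \<le> U y e" using mono2[of y y e] y e1 by auto
  then have yy: "U y y < y" using ne neutR[of y] y e1 by auto
  have A: "e < U x1 t" if "y < t" "t \<le> e" for t
  proof (rule ccontr)
    assume "\<not> e < U x1 t"
    then have "continuous (at y within {0..1}) (U x1)"
      using cont1[of x1 y t] x y that by auto
    then show False using d1 by blast
  qed
  have B: "U x2 t < e" if "0 \<le> t" "t < y" for t
  proof (rule ccontr)
    assume "\<not> U x2 t < e"
    then have "continuous (at y within {0..1}) (U x2)"
      using cont3[of x2 t y] x y that by auto
    then show False using d2 by blast
  qed
  have x1e: "e < x1" using A[of e] neutR[of x1] x y by auto
  define S where "S = {t \<in> {0..e}. U y t = y}"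
  have clS: "closed S" unfolding S_def
    by (rule continuous_closed_preimage_constant[OF cT]) (use y in auto)
  have eS: "e \<in> S" unfolding S_def using neutR[of y] y e0 e1 by auto
  have bddS: "bdd_below S" unfolding S_def by (rule bdd_belowI[of _ 0]) auto
  define b where "b = Inf S"
  have bS: "b \<in> S" unfolding b_def using closed_contains_Inf[OF _ bddS clS] eS by auto
  have be: "b \<le> e" "0 \<le> b" "U y b = y" using bS unfolding S_def by auto
  have b_lt: "U y t < y" if "0 \<le> t" "t < b" for t
  proof -
    have "U y t \<le> U y e" using mono2[of y t e] that be y e1 by auto
    then have le: "U y t \<le> y" using neutR[of y] y e1 by auto
    have "t \<notin> S"
    proof
      assume "t \<in> S"
      then have "b \<le> t" unfolding b_def by (rule cInf_lower[OF _ bddS])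
      then show False using that by auto
    qed
    then have "U y t \<noteq> y" unfolding S_def using that be by auto
    then show ?thesis using le by auto
  qed
  have yb: "y < b"
  proof (rule ccontr)
    assume "\<not> y < b"
    then have "U y b \<le> U y y" using mono2[of y b y] be y e1 by auto
    then show False using be yy by auto
  qed
  have bb: "U b b = b"
  proof -
    have "U y (U b b) = U (U y b) b" using assoc[of y b b] be y e1 by simp
    then have "U y (U b b) = y" using be by simp
    moreover have b1: "0 \<le> U b b" using rng[of b b] be e1 by auto
    moreover have b2: "U b b \<le> b" using mono2[of b b e] neutR[of b] be e1 by auto
    ultimately have "U b b \<in> S" unfolding S_def using be by auto
    then have "b \<le> U b b" unfolding b_def by (rule cInf_lower[OF _ bddS])
    then show ?thesis using b2 by auto
  qed
  have bw: "U b w = w" if wb0: "0 \<le> w" "w \<le> b" for w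
  proof -
    have "U b 0 = 0" using zeroR[of b] be by auto
    moreover have "U b e = b" using neutR[of b] be e1 by auto
    ultimately obtain q where q: "0 \<le> q" "q \<le> e" "U b q = w"
      using IVT'[of "U b" 0 w e] wb0 cT[of b] be e0 by auto
    have "U b w = U b (U b q)" using q by simp
    also have "\<dots> = U (U b b) q" using assoc[of b b q] q be e1 by simp
    also have "\<dots> = w" using bb q by simp
    finally show ?thesis .
  qed
  define \<Lambda> where "\<Lambda> = U x1 ` {y<..<b}"
  define l where "l = Sup \<Lambda>"
  have \<Lambda>ne: "\<Lambda> \<noteq> {}" unfolding \<Lambda>_def using yb by auto
  have \<Lambda>bdd: "bdd_above \<Lambda>" unfolding \<Lambda>_def
  proof (rule bdd_aboveI[of _ x1])
    fix v assume "v \<in> U x1 ` {y<..<b}"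
    then obtain t where t: "y < t" "t < b" "v = U x1 t" by auto
    then show "v \<le> x1" using mono2[of x1 t e] neutR[of x1] x y be x1e by auto
  qed
  have lup: "U x1 t \<le> l" if "y < t" "t < b" for t
    unfolding l_def by (rule cSup_upper[OF _ \<Lambda>bdd]) (use that in \<open>auto simp: \<Lambda>_def\<close>)
  have lx1: "l \<le> x1" unfolding l_def
  proof (rule cSup_least[OF \<Lambda>ne])
    fix v assume "v \<in> \<Lambda>"
    then obtain t where t: "y < t" "t < b" "v = U x1 t" by (auto simp: \<Lambda>_def)
    then show "v \<le> x1" using mono2[of x1 t e] neutR[of x1] x y be x1e by auto
  qed
  have el: "e < l" using lup[of "(y+b)/2"] A[of "(y+b)/2"] yb be by auto
  have P: "e < U l w" if w: "y < w" "w \<le> e" for w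
  proof -
    define w' where "w' = min w ((y+b)/2)"
    have w': "y < w'" "w' < b" "w' \<le> w" using w yb unfolding w'_def by (auto simp: min_def)
    obtain \<delta> where \<delta>: "\<delta> > 0" "\<forall>t\<in>{0..e}. dist t b < \<delta> \<longrightarrow> dist (U w' t) (U w' b) < w' - y"
      using pt_cont[OF cT[of w'], of b "w' - y"] w' be y by auto
    have wb: "U w' b = w'" using comm[of w' b] bw[of w'] w' be y e1 by auto
    define t where "t = max ((y+b)/2) (b - \<delta>/2)"
    have t1: "y < t" using yb \<delta>(1) unfolding t_def max_def by (simp add: abs_if split: if_split; linarith)
    have t2: "t < b" using yb \<delta>(1) unfolding t_def max_def by (simp add: abs_if split: if_split; linarith)
    have t3: "dist t b < \<delta>" using h1[OF yb \<delta>(1)] unfolding t_def dist_real_def .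
    note t = t1 t2 t3
    have "dist (U w' t) w' < w' - y" using \<delta>(2) t wb be y by auto
    then have wt1: "y < U w' t" by (auto simp: dist_real_def)
    have wt2: "U w' t \<le> e" using mono2[of w' t e] neutR[of w'] t w' be y e1 by auto
    have "U l w' \<le> U l w" using mono2[of l w' w] w' w el lx1 x y by auto
    moreover have "U (U x1 t) w' \<le> U l w'"
      using mono1[of "U x1 t" l w'] lup[of t] t rng[of x1 t] x w' be y lx1 e1 by auto
    moreover have "U (U x1 t) w' = U x1 (U w' t)"
      using assoc[of x1 t w'] comm[of t w'] x t w' be y e1 by auto
    moreover have "e < U x1 (U w' t)" using A wt1 wt2 by auto
    ultimately show ?thesis by auto
  qed
  have Q: "U x2 t < l" if t: "y < t" "t < b" for t
  proof (rule ccontr)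
    assume "\<not> U x2 t < l"
    then have lx: "l \<le> U x2 t" by auto
    have "U t y = U y t" using comm[of t y] t y be e1 by auto
    then have ty: "U t y < y" using b_lt[of t] t y by auto
    obtain \<delta> where \<delta>: "\<delta> > 0" "\<forall>w\<in>{0..e}. dist w y < \<delta> \<longrightarrow> dist (U t w) (U t y) < y - U t y"
      using pt_cont[OF cT[of t], of y "y - U t y"] t be y ty by auto
    define w where "w = min (y + \<delta>/2) e"
    have w1: "y < w" using \<delta>(1) y unfolding w_def min_def by (simp add: abs_if split: if_split; linarith)
    have w2: "w \<le> e" using \<delta>(1) y unfolding w_def min_def by (simp add: abs_if split: if_split; linarith)
    have w3: "dist w y < \<delta>" using h2[OF y(2) \<delta>(1)] unfolding w_def dist_real_def .
    note w = w1 w2 w3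
    have "dist (U t w) (U t y) < y - U t y" using \<delta>(2) w y by auto
    then have tw: "U t w < y" by (auto simp: dist_real_def)
    have tw0: "0 \<le> U t w" using rng[of t w] t w y be e1 by auto
    have "U l w \<le> U (U x2 t) w" using mono1[of l "U x2 t" w] lx el rng[of x2 t] x t w be y e1 by auto
    moreover have "U (U x2 t) w = U x2 (U t w)" using assoc[of x2 t w] x t w be y e1 by auto
    moreover have "U x2 (U t w) < e" using B tw tw0 by auto
    ultimately show False using P[OF w(1,2)] by auto
  qed
  obtain s where s: "e \<le> s" "s \<le> 1" "U x1 s = x2"
    using IVT'[of "U x1" e x2 1] neutR[of x1] oneR[of x1] cC[of x1] x x1e e1 by auto
  have Us: "U x2 t = U s (U x1 t)" if t: "y < t" "t < b" for t
  proof -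
    have "U x2 t = U x1 (U s t)" using assoc[of x1 s t] s x t y be e1 by auto
    also have "\<dots> = U x1 (U t s)" using comm[of s t] s t y be e1 by auto
    also have "\<dots> = U (U x1 t) s" using assoc[of x1 t s] s x t y be e1 by auto
    also have "\<dots> = U s (U x1 t)" using comm[of "U x1 t" s] rng[of x1 t] s x t y be e1 by auto
    finally show ?thesis .
  qed
  have sl1: "U s l \<le> l"
  proof (rule ccontr)
    assume "\<not> U s l \<le> l"
    then have gt: "l < U s l" by auto
    obtain \<delta> where \<delta>: "\<delta> > 0" "\<forall>v\<in>{e..1}. dist v l < \<delta> \<longrightarrow> dist (U s v) (U s l) < U s l - l"
      using pt_cont[OF cC[of s], of l "U s l - l"] s el lx1 x gt by auto
    have "l - \<delta> < Sup \<Lambda>" using \<delta> l_def by auto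
    then obtain v where v: "v \<in> \<Lambda>" "l - \<delta> < v" using less_cSup_iff[OF \<Lambda>ne \<Lambda>bdd] by auto
    then obtain t where t: "y < t" "t < b" "v = U x1 t" by (auto simp: \<Lambda>_def)
    have vl: "v \<le> l" using lup t by auto
    have ve: "e \<le> v" using A[of t] t be by auto
    have "dist (U s v) (U s l) < U s l - l" using \<delta>(2) v vl ve lx1 x by (auto simp: dist_real_def)
    then have "l < U s v" by (auto simp: dist_real_def)
    moreover have "U s v = U x2 t" using Us t by auto
    ultimately show False using Q[OF t(1,2)] by auto
  qed
  have sl2: "l \<le> U s l" using mono1[of e s l] neutL[of l] s el lx1 x e0 by auto
  have sl: "U s l = l" using sl1 sl2 by auto
  obtain r where r: "e \<le> r" "r \<le> 1" "U l r = x1"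
    using IVT'[of "U l" e x1 1] neutR[of l] oneR[of l] cC[of l] x el lx1 e0 e1 by auto
  have "x2 = U (U l r) s" using s r by auto
  also have "\<dots> = U l (U r s)" using assoc[of l r s] r s el lx1 x e0 by auto
  also have "\<dots> = U l (U s r)" using comm[of r s] r s e0 by auto
  also have "\<dots> = U (U l s) r" using assoc[of l s r] r s el lx1 x e0 by auto
  also have "\<dots> = x1" using sl comm[of l s] r s el lx1 x e0 by auto
  finally show False using x by auto
qed



lemma dual: "unin (\<lambda>a b. 1 - U (1-a) (1-b)) (1-e)"
proof unfold_locales
  show "uninorm (\<lambda>a b. 1 - U (1 - a) (1 - b)) (1 - e)"
    unfolding uninorm_def
  proof (intro conjI ballI impI)
    show "1 - e \<in> {0..1}" using e0 e1 by auto
  next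
    fix x y assume "x \<in> {0..1::real}" "y \<in> {0..1::real}"
    then show "1 - U (1 - x) (1 - y) \<in> {0..1}" using rng[of "1-x" "1-y"] by auto
  next
    fix x y assume "x \<in> {0..1::real}" "y \<in> {0..1::real}"
    then show "1 - U (1 - x) (1 - y) = 1 - U (1 - y) (1 - x)" using comm[of "1-x" "1-y"] by auto
  next
    fix x y z assume "x \<in> {0..1::real}" "y \<in> {0..1::real}" "z \<in> {0..1::real}"
    then show "1 - U (1 - (1 - U (1 - x) (1 - y))) (1 - z) = 1 - U (1 - x) (1 - (1 - U (1 - y) (1 - z)))"
      using assoc[of "1-x" "1-y" "1-z"] by auto
  next
    fix x y z assume "x \<in> {0..1::real}" "y \<in> {0..1::real}" "z \<in> {0..1::real}" "y \<le> z"
    then show "1 - U (1 - x) (1 - y) \<le> 1 - U (1 - x) (1 - z)"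
      using mono2[of "1-x" "1-z" "1-y"] by auto
  next
    fix x assume "x \<in> {0..1::real}"
    then show "1 - U (1 - (1 - e)) (1 - x) = x" using neutL[of "1-x"] by auto
  qed
  show "0 < 1 - e" "1 - e < 1" using e0 e1 by auto
next
  fix a assume a: "a \<in> {0..1-e}"
  have c1: "continuous_on {0..1-e} (\<lambda>b::real. 1 - b)" by (intro continuous_intros)
  have im: "(\<lambda>b::real. 1 - b) ` {0..1-e} \<subseteq> {e..1}" using e0 by auto
  have "continuous_on {0..1-e} (\<lambda>b. U (1-a) (1 - b))"
    by (rule continuous_on_compose2[OF cC[of "1-a"] c1 im]) (use a e0 in auto)
  then show "continuous_on {0..1 - e} (\<lambda>b. 1 - U (1 - a) (1 - b))"
    by (intro continuous_intros)
next
  fix a assume a: "a \<in> {1-e..1}"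
  have c1: "continuous_on {1-e..1} (\<lambda>b::real. 1 - b)" by (intro continuous_intros)
  have im: "(\<lambda>b::real. 1 - b) ` {1-e..1} \<subseteq> {0..e}" using e1 by auto
  have "continuous_on {1-e..1} (\<lambda>b. U (1-a) (1 - b))"
    by (rule continuous_on_compose2[OF cT[of "1-a"] c1 im]) (use a e1 in auto)
  then show "continuous_on {1 - e..1} (\<lambda>b. 1 - U (1 - a) (1 - b))"
    by (intro continuous_intros)
qed

end

lemma transfer_cont:
  fixes f :: "real \<Rightarrow> real"
  assumes c: "continuous (at (1-y) within {0..1}) (\<lambda>z. 1 - f (1-z))"
  shows "continuous (at y within {0..1}) f"
  unfolding continuous_within_eps_delta
proof (intro allI impI)
  fix \<epsilon> :: real assume "\<epsilon> > 0"
  then obtain \<delta> where \<delta>: "\<delta> > 0" "\<forall>x'\<in>{0..1}. dist x' (1-y) < \<delta> \<longrightarrow> dist (1 - f (1-x')) (1 - f (1-(1-y))) < \<epsilon>"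
    using c unfolding continuous_within_eps_delta by blast
  show "\<exists>\<delta>>0. \<forall>x'\<in>{0..1}. dist x' y < \<delta> \<longrightarrow> dist (f x') (f y) < \<epsilon>"
  proof (intro exI[of _ \<delta>] conjI ballI impI)
    fix x' :: real assume x': "x' \<in> {0..1}" "dist x' y < \<delta>"
    have "1 - x' \<in> {0..1}" "dist (1-x') (1-y) < \<delta>" using x' by (auto simp: dist_real_def)
    then have "dist (1 - f (1-(1-x'))) (1 - f (1-(1-y))) < \<epsilon>" using \<delta>(2) by blast
    then show "dist (f x') (f y) < \<epsilon>" by (auto simp: dist_real_def)
  qed (use \<delta> in auto)
qed

lemma classU_unin:
  assumes "uninorm U e" "0 < e" "e < 1" "in_class_U U e"
  shows "unin U e"
proof unfold_locales
  show "uninorm U e" "0 < e" "e < 1" using assms by auto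
next
  fix a assume a: "a \<in> {0..e}"
  have Tc: "continuous_on ({0..1} \<times> {0..1}) (\<lambda>p. underlying_tnorm U e (fst p) (snd p))"
    using assms(4) unfolding in_class_U_def by auto
  have c1: "continuous_on {0..e} (\<lambda>t. (a/e, t/e))" using assms(2) by (intro continuous_intros) auto
  have im: "(\<lambda>t. (a/e, t/e)) ` {0..e} \<subseteq> {0..1} \<times> {0..1}" using a assms(2) by auto
  have "continuous_on {0..e} (\<lambda>t. underlying_tnorm U e (fst (a/e, t/e)) (snd (a/e, t/e)))"
    by (rule continuous_on_compose2[OF Tc c1 im])
  then have "continuous_on {0..e} (\<lambda>t. e * underlying_tnorm U e (a/e) (t/e))"
    by (intro continuous_intros) auto
  then show "continuous_on {0..e} (U a)"
    by (rule continuous_on_eq) (use assms(2) in \<open>auto simp add: underlying_tnorm_def\<close>)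
next
  fix a assume a: "a \<in> {e..1}"
  have Cc: "continuous_on ({0..1} \<times> {0..1}) (\<lambda>p. underlying_tconorm U e (fst p) (snd p))"
    using assms(4) unfolding in_class_U_def by auto
  have c1: "continuous_on {e..1} (\<lambda>t. ((a-e)/(1-e), (t-e)/(1-e)))" using assms(3) by (intro continuous_intros) auto
  have im: "(\<lambda>t. ((a-e)/(1-e), (t-e)/(1-e))) ` {e..1} \<subseteq> {0..1} \<times> {0..1}"
    using a assms(3) by (auto simp: divide_simps)
  have "continuous_on {e..1} (\<lambda>t. underlying_tconorm U e (fst ((a-e)/(1-e), (t-e)/(1-e))) (snd ((a-e)/(1-e), (t-e)/(1-e))))"
    by (rule continuous_on_compose2[OF Cc c1 im])
  then have "continuous_on {e..1} (\<lambda>t. e + (1-e) * underlying_tconorm U e ((a-e)/(1-e)) ((t-e)/(1-e)))"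
    by (intro continuous_intros) auto
  then show "continuous_on {e..1} (U a)"
    by (rule continuous_on_eq) (use assms(3) in \<open>auto simp add: underlying_tconorm_def\<close>)
qed

theorem proposition17:
  fixes U :: "real \<Rightarrow> real \<Rightarrow> real" and e x1 x2 y :: real
  assumes "uninorm U e" and "0 < e" and "e < 1"
    and "in_class_U U e"
    and "x1 \<in> {0..1}" and "x2 \<in> {0..1}" and "x1 < x2" and "y \<in> {0..1}"
    and "\<not> continuous (at y within {0..1}) (U x1)"
    and "\<not> continuous (at y within {0..1}) (U x2)"
  shows "idempotent_elem U y"
proof -
  interpret unin U e using classU_unin assms(1-4) by blast
  interpret D: unin "\<lambda>a b. 1 - U (1-a) (1-b)" "1-e" by (rule dual)
  show ?thesis unfolding idempotent_elem_def
  proof (cases "y < e")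
    case True
    then show "U y y = y" using main[of x1 x2 y] assms by auto
  next
    case False
    show "U y y = y"
    proof (cases "y = e")
      case True
      then show ?thesis using neutL[of e] e0 e1 by auto
    next
      case False
      have nd: "\<not> continuous (at (1-y) within {0..1}) ((\<lambda>a b. 1 - U (1-a) (1-b)) (1-x))"
        if "\<not> continuous (at y within {0..1}) (U x)" for x
      proof
        assume "continuous (at (1-y) within {0..1}) ((\<lambda>a b. 1 - U (1-a) (1-b)) (1-x))"
        then have "continuous (at (1-y) within {0..1}) (\<lambda>z. 1 - U x (1-z))" by simp
        then show False using transfer_cont[of y "U x"] that by blast
      qed
      have "1 - U (1-(1-y)) (1-(1-y)) = 1 - y"
        using D.main[of "1-x2" "1-x1" "1-y"] nd[OF assms(10)] nd[OF assms(9)] assms \<open>\<not> y < e\<close> False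
        by auto
      then show ?thesis by simp
    qed
  qed
qed

end
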